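(* Let $\Lambda=(0,+\infty)$ and let $\chi\colon\Lambda\to\mathbb{R}_+^d$ be a continuous bounded function with $\operatorname{supp}\chi=[\lambda_{\min},\lambda_{\max}]$, $0\le\lambda_{\min}<\lambda_{\max}<\infty$, and $\chi(\lambda)\neq\mathbf{0}$ for $\lambda\in(\lambda_{\min},\lambda_{\max})$; let $\eta=\chi/\langle\mathbf{1},\chi\rangle$ on $(\lambda_{\min},\lambda_{\max})$, assumed to extend continuously to $[\lambda_{\min},\lambda_{\max}]$. Let $\mathcal{P}=\{\int_\Lambda\chi\,\mathrm{d}\nu:\nu\text{ a finite nonnegative Borel measure on }\Lambda\}$ (assumed to have nonempty interior), $A=\{\mathbf{x}:\langle\mathbf{x},\mathbf{1}\rangle=1\}$, $\mathcal{T}=\mathcal{P}\cap A$ and $\bar{\mathcal{T}}$ its closure. Let $\mu$ be a finite nonnegative Borel measure on $\Lambda$ and $\tilde\mu=\langle\chi(\cdot),\mathbf{1}\rangle\mu$, and assume $\tilde\mu$ is atomless with $\operatorname{supp}\tilde\mu=[\lambda_{\min},\lambda_{\max}]$. Then for any matrix $P\in\mathbb{R}^{d\times n}$ with columns $\mathbf{c}_1,\dots,\mathbf{c}_n\in\bar{\mathcal{T}}$ and any $\varepsilon>0$ there exist disjoint closed sets $A_1,\dots,A_n\subset[\lambda_{\min},\lambda_{\max}]$ such that \[ \Bigl\|\mathbf{c}_i-\frac{1}{\tilde\mu(A_i)}\int_{A_i}\eta\,\mathrm{d}\tilde\mu\Bigr\|\le\varepsilon,\qquad 1\le i\le n. 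\]
   Context: $\mathbf{1}$ is the all-ones vector in $\mathbb{R}^d$; $\|\cdot\|$ is a norm on $\mathbb{R}^d$. *)

theory Defs
  imports "HOL-Probability.Probability"
begin

definition is_norm :: "('a::real_vector \<Rightarrow> real) \<Rightarrow> bool" where
  "is_norm N \<longleftrightarrow> (\<forall>x. 0 \<le> N x) \<and> (\<forall>x. N x = 0 \<longleftrightarrow> x = 0) \<and>
     (\<forall>a x. N (a *\<^sub>R x) = \<bar>a\<bar> * N x) \<and> (\<forall>x y. N (x + y) \<le> N x + N y)"

definition measure_support :: "real measure \<Rightarrow> real set" where
  "measure_support M = {x. \<forall>e>0. emeasure M (ball x e) > 0}"

text \<open>Finite nonnegative Borel measures on \<open>\<Lambda> = (0,\<infinity>)\<close>, represented as Borel measures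
  on the real line giving no mass to \<open>(-\<infinity>,0]\<close>.\<close>
definition fin_borel_on_Lambda :: "real measure \<Rightarrow> bool" where
  "fin_borel_on_Lambda \<nu> \<longleftrightarrow> sets \<nu> = sets borel \<and> finite_measure \<nu> \<and> emeasure \<nu> {..0} = 0"

definition cone_P :: "(real \<Rightarrow> real^'d) \<Rightarrow> (real^'d) set" where
  "cone_P chi = {x. \<exists>\<nu>. fin_borel_on_Lambda \<nu> \<and> set_integrable \<nu> {0<..} chi \<and>
                      x = set_lebesgue_integral \<nu> {0<..} chi}"

definition hyperplane_A :: "(real^'d) set" where
  "hyperplane_A = {x. (\<Sum>i\<in>UNIV. x $ i) = 1}"

definition tilde_measure :: "(real \<Rightarrow> real^'d) \<Rightarrow> real measure \<Rightarrow> real measure" where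
  "tilde_measure chi \<mu> = density \<mu> (\<lambda>l. ennreal (indicator {0<..} l * (\<Sum>i\<in>UNIV. chi l $ i)))"

end

theory Submission
  imports Defs
begin

lemma pieces:
  fixes M :: "real measure" and w :: "nat \<Rightarrow> real"
  assumes fbm: "finite_borel_measure M" and atom: "\<And>x. measure M {x} = 0"
    and ab: "a < b" and n: "n > 0"
    and w: "\<And>i. i < n \<Longrightarrow> 0 \<le> w i \<and> w i < measure M {a<..<b} / (2*n+1)"
  shows "\<exists>p q. (\<forall>i<n. a < p i \<and> p i \<le> q i \<and> q i < b \<and> measure M {p i..q i} = w i)
     \<and> (\<forall>i<n. \<forall>j<n. i < j \<longrightarrow> q i < p j)"
proof -
  interpret finite_borel_measure M by fact
  define F where "F = cdf M"
  define m where "m = measure M {a<..<b}"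
  define h where "h = m / (2*n+1)"
  have cont: "continuous_on S F" for S
    unfolding F_def by (intro continuous_at_imp_continuous_on ballI) (simp add: isCont_cdf atom)
  have mono: "x \<le> y \<Longrightarrow> F x \<le> F y" for x y unfolding F_def by (rule cdf_nondecreasing)
  have diff: "x \<le> y \<Longrightarrow> measure M {x..y} = F y - F x" for x y
  proof -
    assume xy: "x \<le> y"
    show ?thesis
    proof (cases "x = y")
      case True thus ?thesis using atom by simp
    next
      case False
      hence "x < y" using xy by simp
      have "{x..y} = {x} \<union> {x<..y}" using xy by auto
      hence "measure M {x..y} = measure M {x} + measure M {x<..y}"
        using finite_measure_Union[of "{x}" "{x<..y}"] sets_M[of "{x}"] sets_M[of "{x<..y}"] by auto
      thus ?thesis using cdf_diff_eq[OF \<open>x<y\<close>] atom unfolding F_def by simp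
    qed
  qed
  have Fb: "F b = F a + m"
  proof -
    have "{a<..b} = {a<..<b} \<union> {b}" using ab by auto
    hence "measure M {a<..b} = m + measure M {b}" unfolding m_def
      using finite_measure_Union[of "{a<..<b}" "{b}"] sets_M[of "{b}"] sets_M[of "{a<..<b}"] by auto
    thus ?thesis using cdf_diff_eq[OF ab] atom unfolding F_def by simp
  qed
  have ivt: "\<exists>x. u \<le> x \<and> x \<le> b \<and> F x = y" if "a \<le> u" "u \<le> b" "F u \<le> y" "y \<le> F b" for u y
    using IVT'[of F u y b] that cont by auto
  have hpos: "h \<ge> 0" using w[of 0] n unfolding h_def m_def by linarith
  have "0 < m / (2*n+1)" using w[of 0] n unfolding m_def by linarith
  hence mpos: "0 < m" by (simp add: zero_less_divide_iff)
  have hm: "2*n*h < m" using mpos unfolding h_def by (simp add: field_simps)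
  define P where "P i pq \<longleftrightarrow> a < fst pq \<and> fst pq \<le> snd pq \<and> snd pq < b \<and> F (fst pq) = F a + (2*real i+1)*h
        \<and> F (snd pq) = F a + (2*real i+1)*h + w i" for i pq
  have "\<forall>i<n. \<exists>pq. P i pq"
  proof (intro allI impI)
    fix i assume i: "i < n"
    have wi: "0 \<le> w i" "w i < h" using w[OF i] unfolding h_def m_def by auto
    have "(2*real i+1)*h + w i < (2*real i+2) * h" using wi by (simp add: algebra_simps)
    also have "\<dots> \<le> 2*n*h" using i hpos by (intro mult_right_mono) auto
    finally have lt: "(2*real i+1)*h + w i < m" using hm by linarith
    have hp: "0 < h" using wi by linarith
    have y1: "F a < F a + (2*real i+1)*h" using hp by simp
    obtain p where p: "a \<le> p" "p \<le> b" "F p = F a + (2*real i+1)*h"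
      using ivt[of a "F a + (2*real i+1)*h"] ab lt wi Fb hp by auto
    obtain q where q: "p \<le> q" "q \<le> b" "F q = F a + (2*real i+1)*h + w i"
      using ivt[of p "F a + (2*real i+1)*h + w i"] p lt wi Fb by auto
    have "p \<noteq> a" using p y1 by auto
    moreover have "q \<noteq> b" using q lt Fb by auto
    ultimately have "P i (p,q)" using p q unfolding P_def by auto
    thus "\<exists>pq. P i pq" by blast
  qed
  then obtain pq where pq: "\<forall>i<n. P i (pq i)" by metis
  show ?thesis
  proof (intro exI conjI allI impI)
    fix i assume i: "i < n"
    show "a < fst (pq i)" "fst (pq i) \<le> snd (pq i)" "snd (pq i) < b" using pq i unfolding P_def by auto
    show "measure M {fst (pq i)..snd (pq i)} = w i" using pq i diff[of "fst (pq i)" "snd (pq i)"] unfolding P_def by auto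
  next
    fix i j assume ij: "i < n" "j < n" "i < j"
    have wi: "w i < h" using w[OF ij(1)] unfolding h_def m_def by auto
    have "2*real i+2 \<le> 2*real j+1" using ij by linarith
    hence "(2*real i+2) * h \<le> (2*real j+1)*h" using hpos by (intro mult_right_mono) auto
    hence "F (snd (pq i)) < F (fst (pq j))" using pq ij wi unfolding P_def by (simp add: algebra_simps)
    thus "snd (pq i) < fst (pq j)" using mono by (meson not_le)
  qed
qed

lemma is_norm_sum:
  assumes "is_norm N" "finite I"
  shows "N (\<Sum>i\<in>I. f i) \<le> (\<Sum>i\<in>I. N (f i))"
  using assms(2)
proof induction
  case empty
  have "N 0 = 0" using assms(1) unfolding is_norm_def by blast
  thus ?case by simp
next
  case (insert x F)
  have "N (f x + sum f F) \<le> N (f x) + N (sum f F)" using assms(1) unfolding is_norm_def by blast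
  thus ?case using insert by simp
qed

lemma is_norm_bound:
  fixes N :: "real^'d \<Rightarrow> real"
  assumes "is_norm N"
  shows "\<exists>C>0. \<forall>x. N x \<le> C * norm x"
proof -
  define C where "C = (\<Sum>i\<in>UNIV. N (axis i 1)) + 1"
  have N0: "\<And>x. 0 \<le> N x" using assms unfolding is_norm_def by blast
  have Cpos: "C > 0" unfolding C_def using N0 by (simp add: add_nonneg_pos sum_nonneg)
  have "N x \<le> C * norm x" for x
  proof -
    have "x = (\<Sum>i\<in>UNIV. x$i *\<^sub>R axis i 1)"
      using basis_expansion[of x] by (simp add: scalar_mult_eq_scaleR)
    hence "N x \<le> (\<Sum>i\<in>UNIV. N (x$i *\<^sub>R axis i (1::real)))"
      using is_norm_sum[OF assms, of UNIV] by (metis finite_class.finite_UNIV)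
    also have "\<dots> = (\<Sum>i\<in>UNIV. \<bar>x$i\<bar> * N (axis i 1))"
      using assms unfolding is_norm_def by simp
    also have "\<dots> \<le> (\<Sum>i\<in>UNIV. norm x * N (axis i 1))"
      by (intro sum_mono mult_right_mono component_le_norm_cart N0)
    also have "\<dots> \<le> C * norm x" unfolding C_def
      by (simp add: sum_distrib_left[symmetric] algebra_simps)
    finally show ?thesis .
  qed
  thus ?thesis using Cpos by blast
qed

lemma convex_hull_indexed:
  fixes g :: "'i \<Rightarrow> 'a::real_vector"
  assumes "finite I" "y \<in> convex hull (g ` I)"
  shows "\<exists>v. (\<forall>k\<in>I. 0 \<le> v k) \<and> sum v I = 1 \<and> (\<Sum>k\<in>I. v k *\<^sub>R g k) = y"
proof -
  have fin: "finite (g ` I)" using assms by simp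
  obtain u where u: "\<forall>x\<in>g ` I. 0 \<le> u x" "sum u (g ` I) = 1" "(\<Sum>x\<in>g ` I. u x *\<^sub>R x) = y"
    using assms(2) unfolding convex_hull_finite[OF fin] by blast
  define c where "c k = real (card {j\<in>I. g j = g k})" for k
  have cpos: "k \<in> I \<Longrightarrow> c k > 0" for k unfolding c_def using assms(1)
    by (auto simp: card_gt_0_iff)
  define v where "v k = u (g k) / c k" for k
  have grp: "(\<Sum>k\<in>I. h k) = (\<Sum>s\<in>g ` I. \<Sum>k\<in>{j\<in>I. g j = s}. h k)" for h :: "'i \<Rightarrow> 'b::comm_monoid_add"
    using sum.image_gen[OF assms(1)] by blast
  have inner: "(\<Sum>k\<in>{j\<in>I. g j = s}. v k *\<^sub>R g k) = u s *\<^sub>R s" "(\<Sum>k\<in>{j\<in>I. g j = s}. v k) = u s"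
    if s: "s \<in> g ` I" for s
  proof -
    have cs: "\<And>k. k \<in> {j\<in>I. g j = s} \<Longrightarrow> c k = real (card {j\<in>I. g j = s})"
      unfolding c_def by auto
    have ne: "card {j\<in>I. g j = s} > 0" using s assms(1) by (auto simp: card_gt_0_iff)
    have "(\<Sum>k\<in>{j\<in>I. g j = s}. v k *\<^sub>R g k) = (\<Sum>k\<in>{j\<in>I. g j = s}. (u s / real (card {j\<in>I. g j = s})) *\<^sub>R s)"
      by (intro sum.cong) (auto simp: v_def cs)
    also have "\<dots> = u s *\<^sub>R s" using ne by (simp add: sum_constant_scaleR scaleR_scaleR)
    finally show "(\<Sum>k\<in>{j\<in>I. g j = s}. v k *\<^sub>R g k) = u s *\<^sub>R s" .
    have "(\<Sum>k\<in>{j\<in>I. g j = s}. v k) = (\<Sum>k\<in>{j\<in>I. g j = s}. (u s / real (card {j\<in>I. g j = s})))"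
      by (intro sum.cong) (auto simp: v_def cs)
    also have "\<dots> = u s" using ne by simp
    finally show "(\<Sum>k\<in>{j\<in>I. g j = s}. v k) = u s" .
  qed
  show ?thesis
  proof (intro exI conjI ballI)
    fix k assume "k \<in> I" thus "0 \<le> v k" using u cpos[of k] unfolding v_def by auto
  next
    show "sum v I = 1" using grp[of v] inner(2) u(2) by simp
  next
    show "(\<Sum>k\<in>I. v k *\<^sub>R g k) = y" using grp[of "\<lambda>k. v k *\<^sub>R g k"] inner(1) u(3) by simp
  qed
qed

lemma chi_zero:
  fixes chi :: "real \<Rightarrow> real^'d"
  assumes chi_cont: "continuous_on {0<..} chi"
    and lam: "0 \<le> lam_min" "lam_min < lam_max"
    and chi_supp: "closure {l\<in>{0<..}. chi l \<noteq> 0} = {lam_min..lam_max}"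
    and l: "l > 0" "l \<notin> {lam_min<..<lam_max}"
  shows "chi l = 0"
proof -
  have out: "chi x = 0" if "x > 0" "x \<notin> {lam_min..lam_max}" for x
    using that closure_subset[of "{l\<in>{0<..}. chi l \<noteq> 0}"] chi_supp by auto
  have c: "(chi \<longlongrightarrow> chi l) (at l)"
    using chi_cont l continuous_on_eq_continuous_at[of "{0<..}" chi] by (auto simp: isCont_def)
  consider "l \<notin> {lam_min..lam_max}" | "l = lam_max" | "l = lam_min" using l by force
  thus ?thesis
  proof cases
    case 1 thus ?thesis using out l by auto
  next
    case 2
    have c': "(chi \<longlongrightarrow> chi l) (at_right l)" by (rule tendsto_mono[OF at_le[OF subset_UNIV] c])
    have "eventually (\<lambda>x. x \<in> {l<..<l+1}) (at_right l)" by (rule eventually_at_right_real) simp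
    hence "eventually (\<lambda>x. chi x = 0) (at_right l)"
      by eventually_elim (use out l 2 in auto)
    hence "(chi \<longlongrightarrow> 0) (at_right l)" by (rule tendsto_eventually)
    thus ?thesis using tendsto_unique[OF _ c'] by simp
  next
    case 3
    have c': "(chi \<longlongrightarrow> chi l) (at_left l)" by (rule tendsto_mono[OF at_le[OF subset_UNIV] c])
    have "eventually (\<lambda>x. x \<in> {0<..<l}) (at_left l)" by (rule eventually_at_left_real) (use l in simp)
    hence "eventually (\<lambda>x. chi x = 0) (at_left l)"
      by eventually_elim (use out l 3 in auto)
    hence "(chi \<longlongrightarrow> 0) (at_left l)" by (rule tendsto_eventually)
    thus ?thesis using tendsto_unique[OF _ c'] by simp
  qed
qed

lemma cone_in_hull:
  fixes chi :: "real \<Rightarrow> real^'d" and \<eta> :: "real \<Rightarrow> real^'d"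
  assumes chi_cont: "continuous_on {0<..} chi"
    and chi_nonneg: "\<forall>l>0. \<forall>i. 0 \<le> chi l $ i"
    and lam: "0 \<le> lam_min" "lam_min < lam_max"
    and chi_supp: "closure {l\<in>{0<..}. chi l \<noteq> 0} = {lam_min..lam_max}"
    and chi_nz: "\<forall>l\<in>{lam_min<..<lam_max}. chi l \<noteq> 0"
    and eta_cont: "continuous_on {lam_min..lam_max} \<eta>"
    and eta_def: "\<forall>l\<in>{lam_min<..<lam_max}. \<eta> l = (1 / (\<Sum>i\<in>UNIV. chi l $ i)) *\<^sub>R chi l"
  shows "cone_P chi \<inter> hyperplane_A \<subseteq> convex hull (\<eta> ` {lam_min..lam_max})"
proof
  fix x assume x: "x \<in> cone_P chi \<inter> hyperplane_A"
  then obtain \<nu> where nu: "set_integrable \<nu> {0<..} chi" "x = set_lebesgue_integral \<nu> {0<..} chi"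
    and sx: "(\<Sum>i\<in>UNIV. x $ i) = 1"
    unfolding cone_P_def hyperplane_A_def by blast
  define S where "S = convex hull (\<eta> ` {lam_min..lam_max})"
  have cS: "compact S" unfolding S_def
    by (intro compact_convex_hull compact_continuous_image eta_cont compact_Icc)
  show "x \<in> S"
  proof (rule ccontr)
    assume "x \<notin> S"
    then obtain a b where ab: "inner a x < b" "\<forall>y\<in>S. inner a y > b"
      using separating_hyperplane_closed_point[of S x] compact_imp_closed[OF cS]
      unfolding S_def by (metis convex_convex_hull)
    define one :: "real^'d" where "one = (\<chi> i. 1)"
    define f where "f l = indicator {0<..} l *\<^sub>R chi l" for l
    have fi: "integrable \<nu> f" using nu(1) unfolding set_integrable_def f_def .
    have xf: "x = integral\<^sup>L \<nu> f" using nu(2) unfolding set_lebesgue_integral_def f_def .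
    have s1: "inner one x = 1" using sx unfolding one_def inner_vec_def by simp
    have pw: "b * inner one (f l) \<le> inner a (f l)" for l
    proof (cases "l > 0")
      case False thus ?thesis by (simp add: f_def)
    next
      case lpos: True
      show ?thesis
      proof (cases "l \<in> {lam_min<..<lam_max}")
        case False
        hence "chi l = 0" using chi_zero[OF chi_cont lam chi_supp lpos] by blast
        thus ?thesis by (simp add: f_def)
      next
        case True
        define s where "s = (\<Sum>i\<in>UNIV. chi l $ i)"
        obtain i where i: "chi l $ i \<noteq> 0" using chi_nz True by (metis vec_eq_iff zero_index)
        have "chi l $ i \<le> s" unfolding s_def
          by (rule member_le_sum) (use chi_nonneg lpos in auto)
        hence spos: "s > 0" using i chi_nonneg lpos by (metis order_le_less order_less_le_trans)
        have cl: "chi l = s *\<^sub>R \<eta> l" using eta_def True spos by (simp add: s_def)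
        have "\<eta> l \<in> S" using True unfolding S_def by (intro hull_inc imageI) auto
        hence lt: "b < inner a (\<eta> l)" using ab by auto
        have os: "inner one (chi l) = s" unfolding one_def inner_vec_def s_def by simp
        have "b * s \<le> s * inner a (\<eta> l)" using lt spos by (simp add: mult.commute)
        moreover have fl: "f l = chi l" using lpos by (simp add: f_def)
        moreover have "inner a (f l) = s * inner a (\<eta> l)" using fl cl by simp
        ultimately show ?thesis using os by (simp add: mult.commute)
      qed
    qed
    have "b = b * inner one x" using s1 by simp
    also have "\<dots> = (\<integral>l. b * inner one (f l) \<partial>\<nu>)" using fi xf by simp
    also have "\<dots> \<le> (\<integral>l. inner a (f l) \<partial>\<nu>)" by (intro integral_mono) (use fi pw in auto)
    also have "\<dots> = inner a x" using fi xf by simp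
    finally show False using ab by simp
  qed
qed

theorem proposition2:
  fixes chi :: "real \<Rightarrow> real^'d"
    and \<eta> :: "real \<Rightarrow> real^'d"
    and lam_min lam_max :: real
    and \<mu> :: "real measure"
    and N :: "real^'d \<Rightarrow> real"
    and n :: nat
    and c :: "nat \<Rightarrow> real^'d"
    and \<epsilon> :: real
  assumes norm: "is_norm N"
    and chi_cont: "continuous_on {0<..} chi"
    and chi_bdd: "bounded (chi ` {0<..})"
    and chi_nonneg: "\<forall>l>0. \<forall>i. 0 \<le> chi l $ i"
    and lam: "0 \<le> lam_min" "lam_min < lam_max"
    and chi_supp: "closure {l\<in>{0<..}. chi l \<noteq> 0} = {lam_min..lam_max}"
    and chi_nz: "\<forall>l\<in>{lam_min<..<lam_max}. chi l \<noteq> 0"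
    and eta_cont: "continuous_on {lam_min..lam_max} \<eta>"
    and eta_def: "\<forall>l\<in>{lam_min<..<lam_max}. \<eta> l = (1 / (\<Sum>i\<in>UNIV. chi l $ i)) *\<^sub>R chi l"
    and P_int: "interior (cone_P chi) \<noteq> {}"
    and mu: "fin_borel_on_Lambda \<mu>"
    and atomless: "\<forall>x. emeasure (tilde_measure chi \<mu>) {x} = 0"
    and mu_supp: "measure_support (tilde_measure chi \<mu>) = {lam_min..lam_max}"
    and cols: "\<forall>i<n. c i \<in> closure (cone_P chi \<inter> hyperplane_A)"
    and eps: "\<epsilon> > 0"
  shows "\<exists>A :: nat \<Rightarrow> real set.
           (\<forall>i<n. closed (A i) \<and> A i \<subseteq> {lam_min..lam_max}) \<and>
           (\<forall>i<n. \<forall>j<n. i \<noteq> j \<longrightarrow> A i \<inter> A j = {}) \<and>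
           (\<forall>i<n. measure (tilde_measure chi \<mu>) (A i) > 0 \<and>
              N (c i - (1 / measure (tilde_measure chi \<mu>) (A i)) *\<^sub>R
                        (set_lebesgue_integral (tilde_measure chi \<mu>) (A i) \<eta>)) \<le> \<epsilon>)"
proof (cases "n = 0")
  case True thus ?thesis by auto
next
  case False
  hence npos: "n > 0" by simp
  define M where "M = tilde_measure chi \<mu>"
  define K where "K = {lam_min..lam_max}"
  have smu: "sets \<mu> = sets borel" using mu unfolding fin_borel_on_Lambda_def by blast
  have finmu: "finite_measure \<mu>" using mu unfolding fin_borel_on_Lambda_def by blast
  have spmu: "space \<mu> = UNIV" using sets_eq_imp_space_eq[OF smu] by simp
  have sM: "sets M = sets borel" unfolding M_def tilde_measure_def using smu by simp
  have spM: "space M = UNIV" using sets_eq_imp_space_eq[OF sM] by simp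
  have chim: "(\<lambda>l. indicator {0<..} l *\<^sub>R chi l) \<in> borel_measurable borel"
    by (rule borel_measurable_continuous_on_indicator) (use chi_cont in auto)
  have dm: "(\<lambda>l. ennreal (indicator {0<..} l * (\<Sum>i\<in>UNIV. chi l $ i))) \<in> borel_measurable \<mu>"
  proof -
    have "(\<lambda>l. (\<Sum>i\<in>UNIV. (indicator {0<..} l *\<^sub>R chi l) $ i)) \<in> borel_measurable borel"
      by (intro borel_measurable_sum) (rule measurable_compose[OF chim borel_measurable_nth])
    hence "(\<lambda>l. indicator {0<..} l * (\<Sum>i\<in>UNIV. chi l $ i)) \<in> borel_measurable borel"
      by (simp add: sum_distrib_left)
    hence "(\<lambda>l. indicator {0<..} l * (\<Sum>i\<in>UNIV. chi l $ i)) \<in> borel_measurable \<mu>"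
      using measurable_cong_sets[OF smu refl] by blast
    thus ?thesis by measurable
  qed
  obtain Bc where Bc: "\<forall>l\<in>{0<..}. norm (chi l) \<le> Bc" using chi_bdd unfolding bounded_iff by auto
  have finM: "finite_measure M"
  proof
    have "emeasure M (space M) = (\<integral>\<^sup>+ l. ennreal (indicator {0<..} l * (\<Sum>i\<in>UNIV. chi l $ i)) \<partial>\<mu>)"
      unfolding spM unfolding M_def tilde_measure_def using emeasure_density[OF dm sets.top[of \<mu>]] spmu
      by simp
    also have "\<dots> \<le> (\<integral>\<^sup>+ l. ennreal (CARD('d) * \<bar>Bc\<bar>) \<partial>\<mu>)"
    proof (intro nn_integral_mono ennreal_leI)
      fix l
      show "indicator {0<..} l * (\<Sum>i\<in>UNIV. chi l $ i) \<le> CARD('d) * \<bar>Bc\<bar>"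
      proof (cases "l > 0")
        case True
        have "(\<Sum>i\<in>UNIV. chi l $ i) \<le> (\<Sum>i\<in>(UNIV::'d set). \<bar>Bc\<bar>)"
          using component_le_norm_cart[of "chi l"] Bc True
          by (intro sum_mono) (metis abs_ge_self abs_le_D1 greaterThan_iff order_trans)
        thus ?thesis using True by simp
      qed simp
    qed
    also have "\<dots> < \<infinity>" using finmu spmu finite_measure.emeasure_finite[OF finmu, of UNIV]
      by (simp add: ennreal_mult_less_top top.not_eq_extremum)
    finally show "emeasure M (space M) \<noteq> \<infinity>" by simp
  qed
  interpret M: finite_measure M by fact
  have fbm: "finite_borel_measure M"
    by (intro finite_borel_measure.intro finite_borel_measure_axioms.intro finM sM)
  have atom: "measure M {x} = 0" for x using atomless unfolding M_def measure_def by simp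
  have supp: "measure M (ball t e) > 0" if "t \<in> K" "e > 0" for t e
  proof -
    have "emeasure M (ball t e) > 0" using mu_supp that unfolding measure_support_def M_def K_def by auto
    thus ?thesis using M.emeasure_eq_measure by simp
  qed
  have Kc: "compact K" unfolding K_def by simp
  obtain Be where Be: "Be > 0" "\<forall>l\<in>K. norm (\<eta> l) \<le> Be"
    using compact_imp_bounded[OF compact_continuous_image[OF eta_cont Kc[unfolded K_def]]]
    unfolding bounded_pos K_def by auto
  have sint: "set_integrable M B g" if g: "continuous_on K g" and B: "B \<subseteq> K" "closed B"
    for g :: "real \<Rightarrow> real^'d" and B
  proof -
    obtain Bg where Bg: "Bg > 0" "\<forall>l\<in>K. norm (g l) \<le> Bg"
      using compact_imp_bounded[OF compact_continuous_image[OF g Kc]] unfolding bounded_pos by auto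
    have "(\<lambda>x. indicator B x *\<^sub>R g x) \<in> borel_measurable borel"
      by (rule borel_measurable_continuous_on_indicator) (use B g continuous_on_subset in auto)
    hence m: "(\<lambda>x. indicator B x *\<^sub>R g x) \<in> borel_measurable M"
      using measurable_cong_sets[OF sM refl] by blast
    have "norm (indicator B x *\<^sub>R g x) \<le> Bg" for x
      using Bg B by (cases "x \<in> B") auto
    thus ?thesis unfolding set_integrable_def
      by (intro M.integrable_const_bound[OF _ m]) auto
  qed
  obtain C where C: "C > 0" "\<forall>x. N x \<le> C * norm x" using is_norm_bound[OF norm] by blast
  define r where "r = \<epsilon> / (2*C)"
  have rpos: "r > 0" unfolding r_def using C eps by simp
  have Cr: "C * r + C * r = \<epsilon>" unfolding r_def using C by (simp add: field_simps)
  have "uniformly_continuous_on K \<eta>" using compact_uniformly_continuous[OF eta_cont] Kc K_def by simp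
  then obtain \<delta> where \<delta>: "\<delta> > 0" "\<forall>x\<in>K. \<forall>y\<in>K. dist y x < \<delta> \<longrightarrow> dist (\<eta> y) (\<eta> x) < r"
    unfolding uniformly_continuous_on_def using rpos by metis
  define L where "L = lam_max - lam_min"
  have Lpos: "L > 0" using lam unfolding L_def by simp
  obtain m :: nat where m: "m > 0" "L / m < \<delta>"
  proof -
    obtain m :: nat where "L / \<delta> < m" using reals_Archimedean2 by blast
    moreover hence "m > 0" using Lpos \<delta> by (metis divide_pos_pos of_nat_0_less_iff order_less_trans)
    ultimately show ?thesis using that \<delta> by (simp add: field_simps)
  qed
  define h where "h = L / m"
  have hpos: "h > 0" unfolding h_def using Lpos m by simp
  have mh: "m * h = L" unfolding h_def using m by simp
  define a where "a k = lam_min + real k * h" for k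
  define t where "t k = lam_min + (real k + 1/2) * h" for k
  have cell_sub: "{a k..a (Suc k)} \<subseteq> K" if "k < m" for k
  proof -
    have "real (Suc k) * h \<le> m * h" using that hpos by (intro mult_right_mono) auto
    thus ?thesis using hpos mh unfolding a_def K_def L_def by auto
  qed
  have tcell: "t k \<in> {a k..a (Suc k)}" for k unfolding a_def t_def using hpos by (auto simp: algebra_simps)
  have tK: "t k \<in> K" if "k < m" for k using tcell cell_sub that by blast
  have cell_ball: "{a k<..<a (Suc k)} = ball (t k) (h/2)" for k
    unfolding ball_eq_greaterThanLessThan a_def t_def by (simp add: algebra_simps)
  have cover: "\<exists>k<m. l \<in> {a k..a (Suc k)}" if l: "l \<in> K" for l
  proof -
    define k where "k = min (nat \<lfloor>(l - lam_min) / h\<rfloor>) (m - 1)"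
    have km: "k < m" unfolding k_def using m by simp
    have l0: "0 \<le> (l - lam_min) / h" using l hpos unfolding K_def by simp
    have "a k \<le> l"
    proof -
      have k1: "real k \<le> real (nat \<lfloor>(l - lam_min) / h\<rfloor>)" unfolding k_def by simp
      have "real (nat \<lfloor>(l - lam_min) / h\<rfloor>) = of_int \<lfloor>(l - lam_min) / h\<rfloor>" using l0 by simp
      also have "\<dots> \<le> (l - lam_min) / h" by (rule of_int_floor_le)
      finally have "real k \<le> (l - lam_min) / h" using k1 by linarith
      thus ?thesis unfolding a_def using hpos by (simp add: field_simps)
    qed
    moreover have "l \<le> a (Suc k)"
    proof (cases "nat \<lfloor>(l - lam_min) / h\<rfloor> \<le> m - 1")
      case True
      hence "k = nat \<lfloor>(l - lam_min) / h\<rfloor>" unfolding k_def by simp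
      hence "(l - lam_min) / h \<le> real k + 1" using l0 by linarith
      thus ?thesis unfolding a_def using hpos by (simp add: field_simps)
    next
      case False
      hence "k = m - 1" unfolding k_def by simp
      hence "Suc k = m" using m by simp
      thus ?thesis unfolding a_def using mh l unfolding K_def L_def by simp
    qed
    ultimately show ?thesis using km by auto
  qed
  have cell_disj: "k = k'" if "x \<in> {a k<..<a (Suc k)}" "x \<in> {a k'<..<a (Suc k')}" for x k k'
  proof (rule ccontr)
    assume "k \<noteq> k'"
    hence "Suc k \<le> k' \<or> Suc k' \<le> k" by auto
    hence "a (Suc k) \<le> a k' \<or> a (Suc k') \<le> a k" unfolding a_def using hpos
      by (auto intro: mult_right_mono)
    thus False using that by auto
  qed
  have close: "norm (\<eta> (t k) - \<eta> l) < r" if "k < m" "l \<in> {a k..a (Suc k)}" for k l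
  proof -
    have "t k - h/2 \<le> l" "l \<le> t k + h/2" using that(2) unfolding a_def t_def by (auto simp: algebra_simps)
    hence "dist l (t k) \<le> h/2" unfolding dist_real_def by (auto simp only: abs_le_iff)
    also have "\<dots> < \<delta>" using m hpos unfolding h_def by simp
    finally have "dist (\<eta> l) (\<eta> (t k)) < r" using \<delta>(2) tK[OF that(1)] cell_sub[OF that(1)] that(2) by blast
    thus ?thesis by (simp add: dist_norm norm_minus_commute)
  qed
  define G where "G = convex hull ((\<lambda>k. \<eta> (t k)) ` {..<m})"
  have hullK: "convex hull (\<eta> ` K) \<subseteq> (\<Union>x\<in>G. \<Union>y\<in>cball 0 r. {x + y})"
  proof (rule hull_minimal)
    show "convex (\<Union>x\<in>G. \<Union>y\<in>cball 0 r. {x + y})" unfolding G_def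
      by (intro convex_sums convex_convex_hull convex_cball)
    show "\<eta> ` K \<subseteq> (\<Union>x\<in>G. \<Union>y\<in>cball 0 r. {x + y})"
    proof
      fix z assume "z \<in> \<eta> ` K"
      then obtain l where l: "l \<in> K" "z = \<eta> l" by blast
      obtain k where k: "k < m" "l \<in> {a k..a (Suc k)}" using cover[OF l(1)] by blast
      have "\<eta> (t k) \<in> G" unfolding G_def using k by (intro hull_inc) auto
      moreover have "\<eta> l - \<eta> (t k) \<in> cball 0 r" using close[OF k] by (simp add: norm_minus_commute)
      ultimately show "z \<in> (\<Union>x\<in>G. \<Union>y\<in>cball 0 r. {x + y})" using l(2)
        by (intro UN_I[of "\<eta> (t k)"] UN_I[of "\<eta> l - \<eta> (t k)"]) auto
    qed
  qed
  have closK: "closure (cone_P chi \<inter> hyperplane_A) \<subseteq> convex hull (\<eta> ` K)"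
    unfolding K_def
    by (intro closure_minimal cone_in_hull[OF chi_cont chi_nonneg lam chi_supp chi_nz eta_cont eta_def]
        compact_imp_closed compact_convex_hull compact_continuous_image[OF eta_cont] compact_Icc)
  have "\<forall>i<n. \<exists>v. (\<forall>k\<in>{..<m}. 0 \<le> v k) \<and> sum v {..<m} = 1 \<and> norm (c i - (\<Sum>k<m. v k *\<^sub>R \<eta> (t k))) \<le> r"
  proof (intro allI impI)
    fix i assume i: "i < n"
    have "c i \<in> (\<Union>x\<in>G. \<Union>y\<in>cball 0 r. {x + y})" using cols i closK hullK by blast
    then obtain x y where xy: "x \<in> G" "y \<in> cball 0 r" "c i = x + y" by blast
    obtain v where v: "\<forall>k\<in>{..<m}. 0 \<le> v k" "sum v {..<m} = 1" "(\<Sum>k<m. v k *\<^sub>R \<eta> (t k)) = x"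
      using convex_hull_indexed[of "{..<m}" x "\<lambda>k. \<eta> (t k)"] xy(1) unfolding G_def by auto
    show "\<exists>v. (\<forall>k\<in>{..<m}. 0 \<le> v k) \<and> sum v {..<m} = 1 \<and> norm (c i - (\<Sum>k<m. v k *\<^sub>R \<eta> (t k))) \<le> r"
      using v xy by (intro exI[of _ v]) auto
  qed
  then obtain v where v: "\<forall>i<n. (\<forall>k\<in>{..<m}. 0 \<le> v i k) \<and> sum (v i) {..<m} = 1 \<and>
      norm (c i - (\<Sum>k<m. v i k *\<^sub>R \<eta> (t k))) \<le> r"
    by metis
  have v1: "v i k \<le> 1" if "i < n" "k < m" for i k
    using member_le_sum[of k "{..<m}" "v i"] v that by auto
  define mk where "mk k = measure M {a k<..<a (Suc k)}" for k
  have mkpos: "mk k > 0" if "k < m" for k unfolding mk_def cell_ball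
    using supp[OF tK[OF that]] hpos by simp
  define \<theta> where "\<theta> = Min ((\<lambda>k. mk k / (2*n+2)) ` {..<m})"
  have \<theta>pos: "\<theta> > 0" unfolding \<theta>_def using m mkpos by (subst Min_gr_iff) auto
  have \<theta>le: "\<theta> \<le> mk k / (2*n+2)" if "k < m" for k unfolding \<theta>_def using that by (intro Min_le) auto
  have "\<forall>k<m. \<exists>pq. (\<forall>i<n. a k < fst pq i \<and> fst pq i \<le> snd pq i \<and> snd pq i < a (Suc k)
       \<and> measure M {fst pq i..snd pq i} = \<theta> * v i k) \<and> (\<forall>i<n. \<forall>j<n. i < j \<longrightarrow> snd pq i < fst pq j)"
  proof (intro allI impI)
    fix k assume k: "k < m"
    have ak: "a k < a (Suc k)" unfolding a_def using hpos by simp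
    have w: "0 \<le> \<theta> * v i k \<and> \<theta> * v i k < measure M {a k<..<a (Suc k)} / (2*n+1)" if i: "i < n" for i
    proof
      show "0 \<le> \<theta> * v i k" using \<theta>pos v i k by auto
      have "\<theta> * v i k \<le> \<theta>" using v1[OF i k] \<theta>pos by (simp add: mult_left_le)
      also have "\<dots> \<le> mk k / (2*n+2)" by (rule \<theta>le[OF k])
      also have "\<dots> < mk k / (2*n+1)" using mkpos[OF k] by (intro divide_strict_left_mono) auto
      finally show "\<theta> * v i k < measure M {a k<..<a (Suc k)} / (2*n+1)" unfolding mk_def .
    qed
    obtain p q where "(\<forall>i<n. a k < p i \<and> p i \<le> q i \<and> q i < a (Suc k) \<and> measure M {p i..q i} = \<theta> * v i k)
     \<and> (\<forall>i<n. \<forall>j<n. i < j \<longrightarrow> q i < p j)"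
      using pieces[OF fbm atom ak npos, of "\<lambda>i. \<theta> * v i k"] w by blast
    thus "\<exists>pq. (\<forall>i<n. a k < fst pq i \<and> fst pq i \<le> snd pq i \<and> snd pq i < a (Suc k)
       \<and> measure M {fst pq i..snd pq i} = \<theta> * v i k) \<and> (\<forall>i<n. \<forall>j<n. i < j \<longrightarrow> snd pq i < fst pq j)"
      by (intro exI[of _ "(p,q)"]) simp
  qed
  then obtain pq where pq: "\<forall>k<m. (\<forall>i<n. a k < fst (pq k) i \<and> fst (pq k) i \<le> snd (pq k) i \<and> snd (pq k) i < a (Suc k)
       \<and> measure M {fst (pq k) i..snd (pq k) i} = \<theta> * v i k) \<and> (\<forall>i<n. \<forall>j<n. i < j \<longrightarrow> snd (pq k) i < fst (pq k) j)"
    by metis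
  define p where "p k i = fst (pq k) i" for k i
  define q where "q k i = snd (pq k) i" for k i
  have pq1: "a k < p k i" "p k i \<le> q k i" "q k i < a (Suc k)" "measure M {p k i..q k i} = \<theta> * v i k"
    if "k < m" "i < n" for k i using pq that unfolding p_def q_def by auto
  have pq2: "q k i < p k j" if "k < m" "i < n" "j < n" "i < j" for k i j
    using pq that unfolding p_def q_def by auto
  define B where "B i k = {p k i..q k i}" for i k
  have Bcell: "B i k \<subseteq> {a k<..<a (Suc k)}" if "k < m" "i < n" for i k
    using pq1[OF that] unfolding B_def by auto
  have BK: "B i k \<subseteq> K" if "k < m" "i < n" for i k
  proof -
    have "B i k \<subseteq> {a k..a (Suc k)}" using pq1[OF that] unfolding B_def by auto
    thus ?thesis using cell_sub[OF that(1)] by blast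
  qed
  define A where "A i = (\<Union>k<m. B i k)" for i
  show ?thesis
  proof (intro exI[of _ A] conjI allI impI)
    fix i assume i: "i < n"
    show "closed (A i)" unfolding A_def B_def by (intro closed_UN) auto
    show "A i \<subseteq> {lam_min..lam_max}" using BK i unfolding A_def K_def by blast
  next
    fix i j assume ij: "i < n" "j < n" "i \<noteq> j"
    show "A i \<inter> A j = {}"
    proof (rule ccontr)
      assume "A i \<inter> A j \<noteq> {}"
      then obtain x k k' where x: "k < m" "k' < m" "x \<in> B i k" "x \<in> B j k'" unfolding A_def by blast
      hence "x \<in> {a k<..<a (Suc k)}" "x \<in> {a k'<..<a (Suc k')}" using Bcell[of k i] Bcell[of k' j] ij by auto
      hence "k = k'" using cell_disj by blast
      hence "x \<in> {p k i..q k i}" "x \<in> {p k j..q k j}" using x unfolding B_def by auto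
      moreover have "q k i < p k j \<or> q k j < p k i" using pq2[of k i j] pq2[of k j i] ij x(1)
        by (cases "i < j") auto
      ultimately show False by auto
    qed
  next
    fix i assume i: "i < n"
    have disj: "disjoint_family_on (B i) {..<m}"
      unfolding disjoint_family_on_def
    proof (intro ballI impI)
      fix k k' assume kk: "k \<in> {..<m}" "k' \<in> {..<m}" "k \<noteq> k'"
      show "B i k \<inter> B i k' = {}"
      proof (rule ccontr)
        assume "B i k \<inter> B i k' \<noteq> {}"
        then obtain x where "x \<in> B i k" "x \<in> B i k'" by blast
        hence "x \<in> {a k<..<a (Suc k)}" "x \<in> {a k'<..<a (Suc k')}" using Bcell[of k i] Bcell[of k' i] kk i by auto
        thus False using cell_disj kk by blast
      qed
    qed
    have Bsets: "B i k \<in> sets M" for k using sM unfolding B_def by simp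
    have mA: "measure M (A i) = \<theta>"
    proof -
      have "measure M (A i) = (\<Sum>k<m. measure M (B i k))" unfolding A_def
        by (rule M.finite_measure_finite_Union) (use disj Bsets in auto)
      also have "\<dots> = (\<Sum>k<m. \<theta> * v i k)" using pq1 i unfolding B_def by (intro sum.cong) auto
      also have "\<dots> = \<theta>" using v i by (simp add: sum_distrib_left[symmetric])
      finally show ?thesis .
    qed
    have Bint: "set_integrable M (B i k) g" if "k < m" "continuous_on K g" for k and g :: "real \<Rightarrow> real^'d"
      by (rule sint) (use that BK[OF that(1) i] in \<open>auto simp: B_def\<close>)
    define I where "I = set_lebesgue_integral M (A i) \<eta>"
    have Ieq: "I = (\<Sum>k<m. set_lebesgue_integral M (B i k) \<eta>)" unfolding I_def A_def
      by (rule set_integral_finite_Union) (use disj Bsets Bint eta_cont K_def in auto)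
    define y where "y = (\<Sum>k<m. v i k *\<^sub>R \<eta> (t k))"
    define D where "D k = set_lebesgue_integral M (B i k) (\<lambda>l. \<eta> (t k) - \<eta> l)" for k
    have Dk: "D k = (\<theta> * v i k) *\<^sub>R \<eta> (t k) - set_lebesgue_integral M (B i k) \<eta>" if k: "k < m" for k
    proof -
      have ic: "set_integrable M (B i k) (\<lambda>l. \<eta> (t k))" by (rule Bint[OF k]) simp
      have ie: "set_integrable M (B i k) \<eta>" by (rule Bint[OF k]) (simp add: K_def eta_cont)
      have "D k = set_lebesgue_integral M (B i k) (\<lambda>l. \<eta> (t k)) - set_lebesgue_integral M (B i k) \<eta>"
        unfolding D_def by (rule set_integral_diff(2)[OF ic ie])
      also have "set_lebesgue_integral M (B i k) (\<lambda>l. \<eta> (t k)) = measure M (B i k) *\<^sub>R \<eta> (t k)"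
        by (rule set_integral_const) (use Bsets M.emeasure_finite in auto)
      finally show ?thesis using pq1[OF k i] unfolding B_def by simp
    qed
    have Dn: "norm (D k) \<le> r * (\<theta> * v i k)" if k: "k < m" for k
    proof -
      have f: "integrable M (\<lambda>l. indicator (B i k) l *\<^sub>R (\<eta> (t k) - \<eta> l))"
      proof -
        have "continuous_on K (\<lambda>l. \<eta> (t k) - \<eta> l)"
          using eta_cont unfolding K_def by (intro continuous_intros) auto
        thus ?thesis using Bint[OF k, of "\<lambda>l. \<eta> (t k) - \<eta> l"] unfolding set_integrable_def by blast
      qed
      have g: "integrable M (\<lambda>l. r * indicator (B i k) l)"
      proof -
        have "emeasure M (B i k) < \<top>" by (simp add: M.emeasure_eq_measure)
        thus ?thesis using Bsets by (intro integrable_mult_right integrable_real_indicator) auto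
      qed
      have "norm (D k) \<le> (\<integral>l. r * indicator (B i k) l \<partial>M)" unfolding D_def set_lebesgue_integral_def
      proof (rule Bochner_Integration.integral_norm_bound_integral[OF f g])
        fix l
        show "norm (indicator (B i k) l *\<^sub>R (\<eta> (t k) - \<eta> l)) \<le> r * indicator (B i k) l"
        proof (cases "l \<in> B i k")
          case True
          hence "l \<in> {a k..a (Suc k)}" using Bcell[OF k i] by auto
          thus ?thesis using close[OF k] True by (simp add: less_imp_le)
        qed simp
      qed
      also have "\<dots> = r * measure M (B i k)" using Bsets M.emeasure_finite by simp
      also have "\<dots> = r * (\<theta> * v i k)" using pq1[OF k i] unfolding B_def by simp
      finally show ?thesis .
    qed
    have SD: "(\<Sum>k<m. D k) = \<theta> *\<^sub>R y - I"
    proof -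
      have "(\<Sum>k<m. D k) = (\<Sum>k<m. (\<theta> * v i k) *\<^sub>R \<eta> (t k) - set_lebesgue_integral M (B i k) \<eta>)"
        using Dk by (intro sum.cong) auto
      also have "\<dots> = \<theta> *\<^sub>R y - I" unfolding y_def Ieq
        by (simp add: sum_subtractf scaleR_sum_right)
      finally show ?thesis .
    qed
    have yI: "y - (1/\<theta>) *\<^sub>R I = (1/\<theta>) *\<^sub>R (\<Sum>k<m. D k)"
      using \<theta>pos unfolding SD by (simp add: algebra_simps)
    have "norm (y - (1/\<theta>) *\<^sub>R I) \<le> (1/\<theta>) * (\<Sum>k<m. norm (D k))"
      unfolding yI using \<theta>pos norm_sum[of D "{..<m}"] by (simp add: divide_right_mono)
    also have "\<dots> \<le> (1/\<theta>) * (\<Sum>k<m. r * (\<theta> * v i k))"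
      using \<theta>pos Dn by (intro mult_left_mono sum_mono) auto
    also have "\<dots> = r" using \<theta>pos v i by (simp add: sum_distrib_left[symmetric])
    finally have n2: "norm (y - (1/\<theta>) *\<^sub>R I) \<le> r" .
    have n1: "norm (c i - y) \<le> r" using v i unfolding y_def by blast
    have "N (c i - (1/\<theta>) *\<^sub>R I) \<le> N (c i - y) + N (y - (1/\<theta>) *\<^sub>R I)"
      using norm unfolding is_norm_def by (metis diff_add_cancel add_diff_eq)
    also have "\<dots> \<le> C * r + C * r"
      using C n1 n2 by (intro add_mono order_trans[OF spec[OF C(2)]] mult_left_mono) auto
    finally have "N (c i - (1/\<theta>) *\<^sub>R I) \<le> \<epsilon>" using Cr by simp
    thus "N (c i - (1 / measure (tilde_measure chi \<mu>) (A i)) *\<^sub>R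
                        (set_lebesgue_integral (tilde_measure chi \<mu>) (A i) \<eta>)) \<le> \<epsilon>"
      using mA unfolding I_def M_def by simp
    show "measure (tilde_measure chi \<mu>) (A i) > 0" using mA \<theta>pos unfolding M_def by simp
  qed
qed

end
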